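(* For integers $t,k\ge0$, the number $b(t,t+2k)$ of marked diagrams $t\to t+2k$ depends only on $t+k$; if $t+k=m$, this number is $\binom{2m}{m}$.
   Context: A Temperley–Lieb diagram $t\to s$ is a rectangle with $t$ points on its bottom edge and $s$ points on its top edge, joined in pairs by $(t+s)/2$ non-crossing arcs, up to isotopy. The arcs divide the rectangle into regions, among which there is a unique leftmost region (the one adjacent to the left edge). A marked diagram $t\to s$ is a Temperley–Lieb diagram $t\to s$ in which each arc lying on the boundary of the leftmost region carries either no mark or exactly one mark (dot), and other arcs carry no mark. *)

theory Defs
  imports Main
begin

text \<open>Boundary points of the rectangle: Bot i (i < t) on the bottom edge,
  numbered left to right, and Top j (j < s) on the top edge, numbered left to right.\<close>
datatype pt = Bot nat | Top nat

definition pts :: "nat \<Rightarrow> nat \<Rightarrow> pt set" where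
  "pts t s = Bot ` {..<t} \<union> Top ` {..<s}"

text \<open>Position of a point when walking along the boundary of the rectangle,
  starting just after the left edge: bottom edge left to right, then the right
  edge, then the top edge right to left, ending at the left edge.\<close>
fun pos :: "nat \<Rightarrow> nat \<Rightarrow> pt \<Rightarrow> nat" where
  "pos t s (Bot i) = i"
| "pos t s (Top j) = t + (s - 1 - j)"

definition perfect_matching :: "pt set \<Rightarrow> pt set set \<Rightarrow> bool" where
  "perfect_matching P M \<longleftrightarrow>
     (\<forall>A\<in>M. A \<subseteq> P \<and> card A = 2) \<and> (\<forall>p\<in>P. \<exists>!A\<in>M. p \<in> A)"

definition crossing :: "nat \<Rightarrow> nat \<Rightarrow> pt set \<Rightarrow> pt set \<Rightarrow> bool" where
  "crossing t s A B \<longleftrightarrow> (\<exists>a b c d. A = {a, b} \<and> B = {c, d} \<and>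
     pos t s a < pos t s c \<and> pos t s c < pos t s b \<and> pos t s b < pos t s d)"

text \<open>Temperley--Lieb diagrams t -> s (up to isotopy) = non-crossing perfect matchings
  of the boundary points.\<close>
definition TL_diagrams :: "nat \<Rightarrow> nat \<Rightarrow> pt set set set" where
  "TL_diagrams t s = {M. perfect_matching (pts t s) M \<and>
     (\<forall>A\<in>M. \<forall>B\<in>M. \<not> crossing t s A B)}"

definition nested_in :: "nat \<Rightarrow> nat \<Rightarrow> pt set \<Rightarrow> pt set \<Rightarrow> bool" where
  "nested_in t s A B \<longleftrightarrow> (\<exists>c d. B = {c, d} \<and>
     (\<forall>x\<in>A. pos t s c < pos t s x \<and> pos t s x < pos t s d))"

text \<open>Arcs on the boundary of the leftmost region (the region adjacent to the left
  edge): exactly those arcs not nested inside any other arc.\<close>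
definition leftmost_arcs :: "nat \<Rightarrow> nat \<Rightarrow> pt set set \<Rightarrow> pt set set" where
  "leftmost_arcs t s M = {A\<in>M. \<not> (\<exists>B\<in>M. nested_in t s A B)}"

text \<open>Marked diagrams: a TL diagram together with the set of dotted arcs, which must
  lie on the boundary of the leftmost region (each carries at most one dot).\<close>
definition marked_diagrams :: "nat \<Rightarrow> nat \<Rightarrow> (pt set set \<times> pt set set) set" where
  "marked_diagrams t s = {(M, D). M \<in> TL_diagrams t s \<and> D \<subseteq> leftmost_arcs t s M}"

definition b :: "nat \<Rightarrow> nat \<Rightarrow> nat" where
  "b t s = card (marked_diagrams t s)"

end

theory Submission
  imports Defs
begin


fun ht :: "bool list \<Rightarrow> int" where
  "ht [] = 0"
| "ht (x # xs) = (if x then 1 else -1) + ht xs"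

lemma ht_append[simp]: "ht (xs @ ys) = ht xs + ht ys"
  by (induction xs) auto

lemma ht_map_Not[simp]: "ht (map Not xs) = - ht xs"
  by (induction xs) auto

definition Dy :: "bool list set" where
  "Dy = {ys. ht ys = 0 \<and> (\<forall>k. 0 \<le> ht (take k ys))}"

definition Dyck :: "nat \<Rightarrow> bool list set" where
  "Dyck n = {ys \<in> Dy. length ys = n}"

definition Bal :: "nat \<Rightarrow> bool list set" where
  "Bal n = {xs. length xs = n \<and> ht xs = 0}"

lemma finite_len: "finite {xs::bool list. length xs = n}"
  using finite_lists_length_eq[where A="UNIV :: bool set"] by simp

lemma finite_Dyck: "finite (Dyck n)"
  by (rule finite_subset[OF _ finite_len[of n]]) (auto simp: Dyck_def)

lemma finite_Bal: "finite (Bal n)"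
  by (rule finite_subset[OF _ finite_len[of n]]) (auto simp: Bal_def)

lemma ht_take_Suc: "j < length r \<Longrightarrow> ht (take (Suc j) r) = ht (take j r) + (if r ! j then 1 else -1)"
  by (simp add: take_Suc_conv_app_nth)

lemma ht_le_length: "\<bar>ht xs\<bar> \<le> int (length xs)"
  by (induction xs) auto

lemma first_neg:
  assumes "ht r < 0"
  shows "\<exists>u v. r = u @ False # v \<and> u \<in> Dy"
proof -
  have ex: "\<exists>k. ht (take k r) < 0" using assms by (metis take_all order_refl)
  define k where "k = (LEAST k. ht (take k r) < 0)"
  have k: "ht (take k r) < 0" unfolding k_def using ex by (rule LeastI_ex)
  have min: "\<not> ht (take j r) < 0" if "j < k" for j
    using that not_less_Least unfolding k_def by blast
  have "k \<noteq> 0" using k by (cases k) auto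
  then obtain j where kj: "k = Suc j" by (cases k) auto
  have jl: "j < length r"
  proof (rule ccontr)
    assume "\<not> j < length r"
    then have "take k r = take j r" using kj by simp
    then show False using k min[of j] kj by simp
  qed
  have hj: "ht (take j r) \<ge> 0" using min[of j] kj by simp
  have hs: "ht (take (Suc j) r) = ht (take j r) + (if r ! j then 1 else -1)" using ht_take_Suc[OF jl] .
  have rj: "\<not> r ! j" and h0: "ht (take j r) = 0" using hs hj k kj by (auto split: if_splits)
  have "r = take j r @ r ! j # drop (Suc j) r" using jl by (simp add: id_take_nth_drop)
  then have r: "r = take j r @ False # drop (Suc j) r" using rj by simp
  have "take j r \<in> Dy"
    unfolding Dy_def
  proof (intro CollectI conjI allI h0)
    fix i
    show "0 \<le> ht (take i (take j r))"
    proof (cases "i < j")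
      case True
      then have "take i (take j r) = take i r" by (simp add: min_def)
      then show ?thesis using min[of i] True kj by simp
    next
      case False
      then show ?thesis using h0 by (simp add: min_def)
    qed
  qed
  with r show ?thesis by blast
qed

lemma Dy_lt:
  assumes "length u < length w" "u @ False # v = w @ False # v'" "w \<in> Dy" "u \<in> Dy"
  shows False
proof -
  have "take (Suc (length u)) (u @ False # v) = u @ [False]" by simp
  moreover have "take (Suc (length u)) (u @ False # v) = take (Suc (length u)) w"
    using assms(1) arg_cong[OF assms(2), of "take (Suc (length u))"] by simp
  ultimately have "ht (take (Suc (length u)) w) = ht (u @ [False])" by simp
  then have "ht (take (Suc (length u)) w) = ht u - 1" by simp
  moreover have "ht u = 0" using assms(4) unfolding Dy_def by simp
  moreover have "0 \<le> ht (take (Suc (length u)) w)" using assms(3) unfolding Dy_def by blast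
  ultimately show False by simp
qed

lemma Dy_unique:
  assumes "u @ False # v = u' @ False # v'" "u \<in> Dy" "u' \<in> Dy"
  shows "u = u' \<and> v = v'"
proof -
  have "length u = length u'"
    using Dy_lt[OF _ assms(1) assms(3) assms(2)] Dy_lt[OF _ assms(1)[symmetric] assms(2) assms(3)]
    by (metis linorder_neqE_nat)
  then show ?thesis using assms(1) by simp
qed

lemma take_decomp: "take (Suc (Suc (length u)) + k) (a # u @ b # v) = a # u @ b # take k v"
  by simp

lemma Dy_cons: assumes "u \<in> Dy" "v \<in> Dy" shows "True # u @ False # v \<in> Dy"
  unfolding Dy_def
proof (intro CollectI conjI allI)
  show "ht (True # u @ False # v) = 0" using assms by (simp add: Dy_def)
  fix k
  show "0 \<le> ht (take k (True # u @ False # v))"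
  proof (cases k)
    case 0 then show ?thesis by simp
  next
    case (Suc k')
    show ?thesis
    proof (cases "k' \<le> length u")
      case True
      then have "ht (take k (True # u @ False # v)) = 1 + ht (take k' u)" using Suc by simp
      then show ?thesis using assms(1) unfolding Dy_def by (smt (verit) mem_Collect_eq)
    next
      case False
      then obtain j where j: "k' = length u + Suc j" by (metis add_Suc_right le_add1 less_imp_Suc_add not_le)
      have "take k (True # u @ False # v) = True # u @ False # take j v"
        using Suc j by simp
      then have "ht (take k (True # u @ False # v)) = ht (take j v)" using assms(1) by (simp add: Dy_def)
      then show ?thesis using assms(2) unfolding Dy_def by simp
    qed
  qed
qed

definition fT :: "bool list \<times> bool list \<Rightarrow> bool list" where
  "fT p = True # fst p @ False # snd p"
definition fF :: "bool list \<times> bool list \<Rightarrow> bool list" where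
  "fF p = False # map Not (fst p) @ True # snd p"

lemma Dyck_rec: "Dyck (Suc (Suc n)) = (\<Union>i\<in>{..n}. fT ` (Dyck i \<times> Dyck (n - i)))"
proof
  show "Dyck (Suc (Suc n)) \<subseteq> (\<Union>i\<in>{..n}. fT ` (Dyck i \<times> Dyck (n - i)))"
  proof
    fix xs assume xs: "xs \<in> Dyck (Suc (Suc n))"
    then obtain x r where xr: "xs = x # r" and lr: "length r = Suc n" unfolding Dyck_def
      by (metis (mono_tags, lifting) length_Suc_conv mem_Collect_eq)
    have "0 \<le> ht (take 1 xs)" using xs unfolding Dyck_def Dy_def by blast
    then have x: "x" using xr by (cases x) auto
    have "ht r < 0" using xs xr x unfolding Dyck_def Dy_def by simp
    then obtain u v where r: "r = u @ False # v" and u: "u \<in> Dy" using first_neg by blast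
    have hv: "ht v = 0" using xs xr x r u unfolding Dyck_def Dy_def by simp
    have "0 \<le> ht (take k v)" for k
    proof -
      have "0 \<le> ht (take (Suc (Suc (length u)) + k) xs)" using xs unfolding Dyck_def Dy_def by blast
      then show ?thesis using xr x r u unfolding Dy_def by simp
    qed
    then have v: "v \<in> Dy" using hv unfolding Dy_def by blast
    have "length u \<le> n" "length v = n - length u" using lr r by auto
    then show "xs \<in> (\<Union>i\<in>{..n}. fT ` (Dyck i \<times> Dyck (n - i)))"
      using u v xr x r unfolding Dyck_def fT_def by (auto intro!: bexI[of _ "length u"] image_eqI[of _ _ "(u,v)"])
  qed
next
  show "(\<Union>i\<in>{..n}. fT ` (Dyck i \<times> Dyck (n - i))) \<subseteq> Dyck (Suc (Suc n))"
    unfolding Dyck_def fT_def using Dy_cons by auto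
qed

lemma Bal_rec: "Bal (Suc (Suc n)) = (\<Union>i\<in>{..n}. fT ` (Dyck i \<times> Bal (n - i))) \<union> (\<Union>i\<in>{..n}. fF ` (Dyck i \<times> Bal (n - i)))"
proof
  show "Bal (Suc (Suc n)) \<subseteq> (\<Union>i\<in>{..n}. fT ` (Dyck i \<times> Bal (n - i))) \<union> (\<Union>i\<in>{..n}. fF ` (Dyck i \<times> Bal (n - i)))"
  proof
    fix xs assume xs: "xs \<in> Bal (Suc (Suc n))"
    then obtain x r where xr: "xs = x # r" and lr: "length r = Suc n" unfolding Bal_def
      by (metis (mono_tags, lifting) length_Suc_conv mem_Collect_eq)
    show "xs \<in> (\<Union>i\<in>{..n}. fT ` (Dyck i \<times> Bal (n - i))) \<union> (\<Union>i\<in>{..n}. fF ` (Dyck i \<times> Bal (n - i)))"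
    proof (cases x)
      case True
      have "ht r < 0" using xs xr True unfolding Bal_def by simp
      then obtain u v where r: "r = u @ False # v" and u: "u \<in> Dy" using first_neg by blast
      have hv: "ht v = 0" using xs xr True r u unfolding Bal_def Dy_def by simp
      have "length u \<le> n" "length v = n - length u" using lr r by auto
      then have "(u,v) \<in> Dyck (length u) \<times> Bal (n - length u)"
        using u hv by (simp add: Dyck_def Bal_def)
      then have "xs \<in> fT ` (Dyck (length u) \<times> Bal (n - length u))"
        by (rule image_eqI[rotated]) (simp add: fT_def xr True r)
      then show ?thesis using \<open>length u \<le> n\<close> by blast
    next
      case False
      have "ht (map Not r) < 0" using xs xr False unfolding Bal_def by simp
      then obtain u v' where r': "map Not r = u @ False # v'" and u: "u \<in> Dy" using first_neg by blast
      have r: "r = map Not u @ True # map Not v'"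
        using arg_cong[OF r', of "map Not"] by (simp add: comp_def)
      have hv: "ht (map Not v') = 0" using xs xr False r u unfolding Bal_def Dy_def by simp
      have "length u \<le> n" "length (map Not v') = n - length u" using lr r by auto
      then have "(u,map Not v') \<in> Dyck (length u) \<times> Bal (n - length u)"
        using u hv by (simp add: Dyck_def Bal_def)
      then have "xs \<in> fF ` (Dyck (length u) \<times> Bal (n - length u))"
        by (rule image_eqI[rotated]) (simp add: fF_def xr False r)
      then show ?thesis using \<open>length u \<le> n\<close> by blast
    qed
  qed
next
  show "(\<Union>i\<in>{..n}. fT ` (Dyck i \<times> Bal (n - i))) \<union> (\<Union>i\<in>{..n}. fF ` (Dyck i \<times> Bal (n - i))) \<subseteq> Bal (Suc (Suc n))"
  proof (intro subsetI, elim UnE UN_E imageE SigmaE)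
    fix x i p u v assume "i \<in> {..n}" "x = fT p" "p = (u, v)" "u \<in> Dyck i" "v \<in> Bal (n - i)"
    then show "x \<in> Bal (Suc (Suc n))" unfolding Dyck_def Bal_def fT_def Dy_def by auto
  next
    fix x i p u v assume "i \<in> {..n}" "x = fF p" "p = (u, v)" "u \<in> Dyck i" "v \<in> Bal (n - i)"
    then show "x \<in> Bal (Suc (Suc n))" unfolding Dyck_def Bal_def fF_def Dy_def by auto
  qed
qed

lemma inj_fT: "inj_on fT (Dy \<times> UNIV)"
proof (rule inj_onI)
  fix p q assume p: "p \<in> Dy \<times> UNIV" and q: "q \<in> Dy \<times> UNIV" and e: "fT p = fT q"
  then have eq: "fst p @ False # snd p = fst q @ False # snd q" unfolding fT_def by simp
  have "fst p \<in> Dy" "fst q \<in> Dy" using p q by (auto simp: mem_Times_iff)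
  from Dy_unique[OF eq this] have "fst p = fst q \<and> snd p = snd q" .
  then show "p = q" by (simp add: prod_eq_iff)
qed

lemma inj_fF: "inj_on fF (Dy \<times> UNIV)"
proof (rule inj_onI)
  fix p q assume p: "p \<in> Dy \<times> UNIV" and q: "q \<in> Dy \<times> UNIV" and e: "fF p = fF q"
  then have "map Not (map Not (fst p) @ True # snd p) = map Not (map Not (fst q) @ True # snd q)"
    unfolding fF_def by simp
  then have eq: "fst p @ False # map Not (snd p) = fst q @ False # map Not (snd q)" by (simp add: comp_def)
  have "fst p \<in> Dy" "fst q \<in> Dy" using p q by (auto simp: mem_Times_iff)
  from Dy_unique[OF eq this] have "fst p = fst q \<and> map Not (snd p) = map Not (snd q)" .
  then have "fst p = fst q \<and> map Not (map Not (snd p)) = map Not (map Not (snd q))" by simp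
  then have "fst p = fst q \<and> snd p = snd q" by (simp add: comp_def)
  then show "p = q" by (simp add: prod_eq_iff)
qed

lemma card_UN_img:
  assumes "inj_on f (\<Union>i\<in>I. A i \<times> B i)" "finite I" "\<And>i. i \<in> I \<Longrightarrow> finite (A i)" "\<And>i. i \<in> I \<Longrightarrow> finite (B i)"
    "\<And>i j. i \<in> I \<Longrightarrow> j \<in> I \<Longrightarrow> i \<noteq> j \<Longrightarrow> (A i \<times> B i) \<inter> (A j \<times> B j) = {}"
  shows "card (\<Union>i\<in>I. f ` (A i \<times> B i)) = (\<Sum>i\<in>I. card (A i) * card (B i))"
proof -
  have "(\<Union>i\<in>I. f ` (A i \<times> B i)) = f ` (\<Union>i\<in>I. A i \<times> B i)" by auto
  then have "card (\<Union>i\<in>I. f ` (A i \<times> B i)) = card (\<Union>i\<in>I. A i \<times> B i)"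
    using card_image[OF assms(1)] by simp
  also have "\<dots> = (\<Sum>i\<in>I. card (A i \<times> B i))"
    apply (rule card_UN_disjoint)
    using assms(2) apply simp
    using assms(3,4) apply (simp add: finite_cartesian_product)
    using assms(5) by blast
  finally show ?thesis by (simp add: card_cartesian_product)
qed

lemma card_Dyck_rec: "card (Dyck (Suc (Suc n))) = (\<Sum>i\<le>n. card (Dyck i) * card (Dyck (n - i)))"
  unfolding Dyck_rec
  apply (rule card_UN_img)
      apply (rule inj_on_subset[OF inj_fT]) apply (force simp: Dyck_def)
     apply (simp_all add: finite_Dyck)
  apply (auto simp: Dyck_def)
  done

lemma card_Bal_rec: "card (Bal (Suc (Suc n))) = (\<Sum>i\<le>n. 2 * card (Dyck i) * card (Bal (n - i)))"
proof -
  have c1: "card (\<Union>i\<in>{..n}. fT ` (Dyck i \<times> Bal (n - i))) = (\<Sum>i\<le>n. card (Dyck i) * card (Bal (n - i)))"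
    apply (rule card_UN_img)
        apply (rule inj_on_subset[OF inj_fT]) apply (force simp: Dyck_def)
       apply (simp_all add: finite_Dyck finite_Bal)
    apply (auto simp: Dyck_def)
    done
  have c2: "card (\<Union>i\<in>{..n}. fF ` (Dyck i \<times> Bal (n - i))) = (\<Sum>i\<le>n. card (Dyck i) * card (Bal (n - i)))"
    apply (rule card_UN_img)
        apply (rule inj_on_subset[OF inj_fF]) apply (force simp: Dyck_def)
       apply (simp_all add: finite_Dyck finite_Bal)
    apply (auto simp: Dyck_def)
    done
  have "card (Bal (Suc (Suc n))) = card (\<Union>i\<in>{..n}. fT ` (Dyck i \<times> Bal (n - i))) + card (\<Union>i\<in>{..n}. fF ` (Dyck i \<times> Bal (n - i)))"
    unfolding Bal_rec
    by (rule card_Un_disjoint) (auto simp: fT_def fF_def finite_Dyck finite_Bal)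
  moreover have "(\<Sum>i\<le>n. 2 * card (Dyck i) * card (Bal (n - i))) = (\<Sum>i\<le>n. card (Dyck i) * card (Bal (n - i))) + (\<Sum>i\<le>n. card (Dyck i) * card (Bal (n - i)))"
    by (simp add: sum.distrib[symmetric] mult_2 add_mult_distrib)
  ultimately show ?thesis using c1 c2 by simp
qed

definition ct :: "bool list \<Rightarrow> nat" where "ct xs = length (filter id xs)"

lemma ht_ct: "ht xs = 2 * int (ct xs) - int (length xs)"
  unfolding ct_def by (induction xs) auto

lemma ct_Cons[simp]: "ct (x # xs) = (if x then Suc (ct xs) else ct xs)"
  by (simp add: ct_def)

lemma Cons_in_image[simp]: "(x # xs \<in> (#) y ` A) = (x = y \<and> xs \<in> A)"
  by auto

lemma len_Suc_split: "{xs. length xs = Suc n \<and> P xs} =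
  (#) True ` {xs. length xs = n \<and> P (True # xs)} \<union> (#) False ` {xs. length xs = n \<and> P (False # xs)}"
proof (intro equalityI subsetI)
  fix xs assume "xs \<in> {xs. length xs = Suc n \<and> P xs}"
  then obtain y ys where "xs = y # ys" "length ys = n" "P (y # ys)" by (cases xs) auto
  then show "xs \<in> (#) True ` {xs. length xs = n \<and> P (True # xs)} \<union> (#) False ` {xs. length xs = n \<and> P (False # xs)}"
    by (cases y) auto
qed auto

lemma card_ct: "card {xs. length xs = n \<and> ct xs = k} = n choose k"
proof (induction n arbitrary: k)
  case 0
  have "{xs. length xs = 0 \<and> ct xs = k} = (if k = 0 then {[]} else {})" by (auto simp: ct_def)
  then show ?case by simp
next
  case (Suc n)
  have e: "{xs. length xs = Suc n \<and> ct xs = k} = (#) True ` {xs. length xs = n \<and> Suc (ct xs) = k} \<union> (#) False ` {xs. length xs = n \<and> ct xs = k}"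
    using len_Suc_split[of n "\<lambda>xs. ct xs = k"] by simp
  have c: "card {xs. length xs = Suc n \<and> ct xs = k} = card {xs. length xs = n \<and> Suc (ct xs) = k} + card {xs. length xs = n \<and> ct xs = k}"
    unfolding e
    by (subst card_Un_disjoint) (auto intro: finite_subset[OF _ finite_len] simp: card_image)
  show ?case
  proof (cases k)
    case 0
    then show ?thesis using c Suc.IH[of 0] by simp
  next
    case (Suc k')
    then show ?thesis using c Suc.IH[of k'] Suc.IH[of k] by simp
  qed
qed

lemma card_Bal: "card (Bal (2 * m)) = (2 * m) choose m"
proof -
  have "Bal (2 * m) = {xs. length xs = 2 * m \<and> ct xs = m}"
    unfolding Bal_def using ht_ct by force
  then show ?thesis using card_ct by simp
qed

lemma Dyck_0: "card (Dyck 0) = 1" and Dyck_1: "card (Dyck 1) = 0"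
  and Bal_0: "card (Bal 0) = 1" and Bal_1: "card (Bal 1) = 0"
proof -
  have "Dyck 0 = {[]}" by (auto simp: Dyck_def Dy_def)
  then show "card (Dyck 0) = 1" by simp
  have "Bal 0 = {[]}" by (auto simp: Bal_def)
  then show "card (Bal 0) = 1" by simp
  have "Bal 1 = {}" by (auto simp: Bal_def length_Suc_conv split: if_splits)
  then show "card (Bal 1) = 0" by simp
  have "Dyck 1 = {}" by (auto simp: Dyck_def Dy_def length_Suc_conv split: if_splits)
  then show "card (Dyck 1) = 0" by simp
qed



definition crossE :: "('a \<Rightarrow> nat) \<Rightarrow> 'a set \<Rightarrow> 'a set \<Rightarrow> bool" where
  "crossE p A B \<longleftrightarrow> (\<exists>a\<in>A. \<exists>b\<in>A. \<exists>c\<in>B. \<exists>d\<in>B. p a < p c \<and> p c < p b \<and> p b < p d)"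
definition nestE :: "('a \<Rightarrow> nat) \<Rightarrow> 'a set \<Rightarrow> 'a set \<Rightarrow> bool" where
  "nestE p A B \<longleftrightarrow> (\<exists>c\<in>B. \<exists>d\<in>B. \<forall>x\<in>A. p c < p x \<and> p x < p d)"
definition pmE :: "'a set \<Rightarrow> 'a set set \<Rightarrow> bool" where
  "pmE P M \<longleftrightarrow> (\<forall>A\<in>M. A \<subseteq> P \<and> card A = 2) \<and> (\<forall>p\<in>P. \<exists>!A\<in>M. p \<in> A)"

lemma pm_pmE: "perfect_matching = pmE"
  unfolding perfect_matching_def pmE_def by (intro ext) simp

definition ncmK :: "('a \<Rightarrow> nat) \<Rightarrow> 'a set \<Rightarrow> 'a set set set" where
  "ncmK p P = {M. pmE P M \<and> (\<forall>A\<in>M. \<forall>B\<in>M. \<not> crossE p A B)}"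
definition outerK :: "('a \<Rightarrow> nat) \<Rightarrow> 'a set set \<Rightarrow> 'a set set" where
  "outerK p M = {A\<in>M. \<not> (\<exists>B\<in>M. nestE p A B)}"
definition mkK :: "('a \<Rightarrow> nat) \<Rightarrow> 'a set \<Rightarrow> ('a set set \<times> 'a set set) set" where
  "mkK p P = {(M, D). M \<in> ncmK p P \<and> D \<subseteq> outerK p M}"

abbreviation "ncm \<equiv> ncmK (id :: nat \<Rightarrow> nat)"
abbreviation "outer \<equiv> outerK (id :: nat \<Rightarrow> nat)"

lemma ncm_arc: "M \<in> ncmK p P \<Longrightarrow> A \<in> M \<Longrightarrow> A \<subseteq> P \<and> card A = 2"
  unfolding ncmK_def pmE_def by blast

lemma ncm_unique: "M \<in> ncmK p P \<Longrightarrow> x \<in> P \<Longrightarrow> A \<in> M \<Longrightarrow> x \<in> A \<Longrightarrow> B \<in> M \<Longrightarrow> x \<in> B \<Longrightarrow> A = B"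
  unfolding ncmK_def pmE_def by blast

lemma ncm_ex: "M \<in> ncmK p P \<Longrightarrow> x \<in> P \<Longrightarrow> \<exists>A\<in>M. x \<in> A"
  unfolding ncmK_def pmE_def by blast

lemma ncm_nc: "M \<in> ncmK p P \<Longrightarrow> A \<in> M \<Longrightarrow> B \<in> M \<Longrightarrow> \<not> crossE p A B"
  unfolding ncmK_def by blast

lemma arc2: "card A = 2 \<Longrightarrow> \<exists>x y. A = {x, y} \<and> x \<noteq> y"
  by (simp add: card_2_iff)

lemma arc_split:
  assumes M: "M \<in> ncm {a..<e}" and ay: "{a, y} \<in> M" "a < y" and C: "C \<in> M"
  shows "C = {a, y} \<or> C \<subseteq> {Suc a..<y} \<or> C \<subseteq> {Suc y..<e}"
proof -
  obtain p q where C2: "C = {p, q}" "p \<noteq> q" using arc2 ncm_arc[OF M C] by blast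
  have pq: "p \<in> {a..<e}" "q \<in> {a..<e}" using ncm_arc[OF M C] C2 by auto
  have yb: "y \<in> {a..<e}" "a \<in> {a..<e}" using ncm_arc[OF M ay(1)] by auto
  show ?thesis
  proof (cases "a \<in> C \<or> y \<in> C")
    case True
    then show ?thesis using ncm_unique[OF M yb(2) ay(1) _ C] ncm_unique[OF M yb(1) ay(1) _ C] by auto
  next
    case False
    then have ne: "p \<noteq> a" "q \<noteq> a" "p \<noteq> y" "q \<noteq> y" using C2 by auto
    have nc: "\<not> crossE id {a, y} C" using ncm_nc[OF M ay(1) C] .
    consider "p < y" "q < y" | "y < p" "y < q" | "p < y" "y < q" | "q < y" "y < p"
      using ne by linarith
    then show ?thesis
    proof cases
      case 1 then show ?thesis using pq ne C2 by auto
    next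
      case 2 then show ?thesis using pq ne C2 by auto
    next
      case 3
      have "a < p" using pq ne by auto
      then have "crossE id {a, y} C" unfolding crossE_def using 3 C2 by force
      then show ?thesis using nc by blast
    next
      case 4
      have "a < q" using pq ne by auto
      then have "crossE id {a, y} C" unfolding crossE_def using 4 C2 by force
      then show ?thesis using nc by blast
    qed
  qed
qed

lemma sep_nc:
  assumes "\<forall>x\<in>A. \<forall>z\<in>B. x < z"
  shows "\<not> crossE id A B \<and> \<not> crossE id B A"
  using assms unfolding crossE_def by force

lemma in_nc:
  assumes "\<forall>z\<in>B. c0 < z \<and> z < d0" "A \<subseteq> {c0, d0}"
  shows "\<not> crossE id A B \<and> \<not> crossE id B A"
  using assms unfolding crossE_def by fastforce

lemma comb:
  assumes ay: "a < y" "y < e" and M1: "M1 \<in> ncm {Suc a..<y}" and M2: "M2 \<in> ncm {Suc y..<e}"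
  shows "insert {a, y} (M1 \<union> M2) \<in> ncm {a..<e}"
proof -
  let ?M = "insert {a, y} (M1 \<union> M2)"
  have s1: "A \<subseteq> {Suc a..<y}" "card A = 2" if "A \<in> M1" for A using ncm_arc[OF M1 that] by auto
  have s2: "A \<subseteq> {Suc y..<e}" "card A = 2" if "A \<in> M2" for A using ncm_arc[OF M2 that] by auto
  have arcs: "\<forall>A\<in>?M. A \<subseteq> {a..<e} \<and> card A = 2"
  proof
    fix A assume "A \<in> ?M"
    then consider "A = {a, y}" | "A \<in> M1" | "A \<in> M2" by blast
    then show "A \<subseteq> {a..<e} \<and> card A = 2"
    proof cases
      case 1 then show ?thesis using ay by auto
    next
      case 2 then show ?thesis using s1[OF 2] ay by force
    next
      case 3 then show ?thesis using s2[OF 3] ay by force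
    qed
  qed
  have uniq: "\<exists>!A\<in>?M. x \<in> A" if x: "x \<in> {a..<e}" for x
  proof -
    have "x = a \<or> x = y \<or> x \<in> {Suc a..<y} \<or> x \<in> {Suc y..<e}" using x ay by simp linarith
    then consider "x = a" | "x = y" | "x \<in> {Suc a..<y}" | "x \<in> {Suc y..<e}" by blast
    then show ?thesis
    proof cases
      case 1
      show ?thesis
      proof (rule ex1I[of _ "{a, y}"])
        fix A assume A: "A \<in> ?M \<and> x \<in> A"
        then consider "A = {a, y}" | "A \<in> M1" | "A \<in> M2" by blast
        then show "A = {a, y}"
        proof cases
          case 2 then show ?thesis using s1(1)[OF 2] 1 A ay by auto
        next
          case 3 then show ?thesis using s2(1)[OF 3] 1 A ay by auto
        qed
      qed (use 1 in auto)
    next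
      case 2
      show ?thesis
      proof (rule ex1I[of _ "{a, y}"])
        fix A assume A: "A \<in> ?M \<and> x \<in> A"
        then consider "A = {a, y}" | "A \<in> M1" | "A \<in> M2" by blast
        then show "A = {a, y}"
        proof cases
          case 2 then show ?thesis using s1(1)[OF 2] \<open>x = y\<close> A ay by auto
        next
          case 3 then show ?thesis using s2(1)[OF 3] \<open>x = y\<close> A ay by auto
        qed
      qed (use 2 in auto)
    next
      case 3
      obtain A where A: "A \<in> M1" "x \<in> A" using ncm_ex[OF M1 3] by blast
      show ?thesis
      proof (rule ex1I[of _ A])
        fix A' assume A': "A' \<in> ?M \<and> x \<in> A'"
        then consider "A' = {a, y}" | "A' \<in> M1" | "A' \<in> M2" by blast
        then show "A' = A"
        proof cases
          case 1 then show ?thesis using A' 3 ay by auto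
        next
          case 2 then show ?thesis using ncm_unique[OF M1 3 A(1) A(2) 2] A' by auto
        next
          case 3 then show ?thesis using A' s2(1)[OF 3] \<open>x \<in> {Suc a..<y}\<close> by auto
        qed
      qed (use A in auto)
    next
      case 4
      obtain A where A: "A \<in> M2" "x \<in> A" using ncm_ex[OF M2 4] by blast
      show ?thesis
      proof (rule ex1I[of _ A])
        fix A' assume A': "A' \<in> ?M \<and> x \<in> A'"
        then consider "A' = {a, y}" | "A' \<in> M1" | "A' \<in> M2" by blast
        then show "A' = A"
        proof cases
          case 1 then show ?thesis using A' 4 ay by auto
        next
          case 2 then show ?thesis using A' s1(1)[OF 2] \<open>x \<in> {Suc y..<e}\<close> by auto
        next
          case 3 then show ?thesis using ncm_unique[OF M2 4 A(1) A(2) 3] A' by auto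
        qed
      qed (use A in auto)
    qed
  qed
  have nc: "\<not> crossE id A B" if A: "A \<in> ?M" and B: "B \<in> ?M" for A B
  proof -
    have c1: "\<not> crossE id A B" if "A \<in> M1" "B \<in> M1" for A B using ncm_nc[OF M1 that] .
    have c2: "\<not> crossE id A B" if "A \<in> M2" "B \<in> M2" for A B using ncm_nc[OF M2 that] .
    have c12: "\<not> crossE id A B \<and> \<not> crossE id B A" if "A \<in> M1" "B \<in> M2" for A B
    proof (rule sep_nc, intro ballI)
      fix x z assume "x \<in> A" "z \<in> B"
      then have "x < y" "y < z" using s1(1)[OF that(1)] s2(1)[OF that(2)] by auto
      then show "x < z" by simp
    qed
    have cy1: "\<not> crossE id A {a,y} \<and> \<not> crossE id {a,y} A" if "A \<in> M1" for A
    proof -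
      have "\<forall>z\<in>A. a < z \<and> z < y" using s1(1)[OF that] by auto
      then have "\<not> crossE id {a,y} A \<and> \<not> crossE id A {a,y}" by (rule in_nc) simp
      then show ?thesis by blast
    qed
    have cy2: "\<not> crossE id A {a,y} \<and> \<not> crossE id {a,y} A" if "A \<in> M2" for A
    proof -
      have "\<forall>x\<in>{a,y}. \<forall>z\<in>A. x < z" using s2(1)[OF that] ay by auto
      then have "\<not> crossE id {a,y} A \<and> \<not> crossE id A {a,y}" by (rule sep_nc)
      then show ?thesis by blast
    qed
    have cyy: "\<not> crossE id {a,y} {a,y}" unfolding crossE_def by auto
    have "A = {a,y} \<or> A \<in> M1 \<or> A \<in> M2" "B = {a,y} \<or> B \<in> M1 \<or> B \<in> M2" using A B by auto
    then show ?thesis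
    proof (elim disjE)
    qed (use c1 c2 c12 cy1 cy2 cyy in \<open>simp_all\<close>)
  qed
  have pm: "pmE {a..<e} ?M" unfolding pmE_def
  proof (intro conjI)
    show "\<forall>A\<in>?M. A \<subseteq> {a..<e} \<and> card A = 2" by (rule arcs)
    show "\<forall>p\<in>{a..<e}. \<exists>!A. A \<in> ?M \<and> p \<in> A" by (intro ballI) (rule uniq)
  qed
  show ?thesis unfolding ncmK_def by (intro CollectI conjI pm ballI nc)
qed


lemma sub_ncm:
  assumes M: "M \<in> ncmK p P" and S: "S \<subseteq> P" and cl: "\<And>x C. x \<in> S \<Longrightarrow> C \<in> M \<Longrightarrow> x \<in> C \<Longrightarrow> C \<subseteq> S"
  shows "{C \<in> M. C \<subseteq> S} \<in> ncmK p S"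
proof -
  have arcs: "\<forall>A\<in>{C \<in> M. C \<subseteq> S}. A \<subseteq> S \<and> card A = 2" using ncm_arc[OF M] by blast
  have uniq: "\<exists>!A. A \<in> {C \<in> M. C \<subseteq> S} \<and> x \<in> A" if x: "x \<in> S" for x
  proof -
    obtain C where C: "C \<in> M" "x \<in> C" using ncm_ex[OF M] x S by blast
    have "C \<subseteq> S" using cl[OF x C(1) C(2)] .
    show ?thesis
    proof (rule ex1I[of _ C])
      show "C \<in> {C \<in> M. C \<subseteq> S} \<and> x \<in> C" using C \<open>C \<subseteq> S\<close> by blast
      fix A assume "A \<in> {C \<in> M. C \<subseteq> S} \<and> x \<in> A"
      then show "A = C" using ncm_unique[OF M _ _ _ C(1) C(2), of A] x S by blast
    qed
  qed
  have pm: "pmE S {C \<in> M. C \<subseteq> S}" unfolding pmE_def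
  proof (intro conjI)
    show "\<forall>A\<in>{C \<in> M. C \<subseteq> S}. A \<subseteq> S \<and> card A = 2" by (rule arcs)
    show "\<forall>x\<in>S. \<exists>!A. A \<in> {C \<in> M. C \<subseteq> S} \<and> x \<in> A" by (intro ballI) (rule uniq)
  qed
  have nc: "\<not> crossE p A B" if "A \<in> {C \<in> M. C \<subseteq> S}" "B \<in> {C \<in> M. C \<subseteq> S}" for A B
    using ncm_nc[OF M] that by blast
  have "\<forall>A\<in>{C \<in> M. C \<subseteq> S}. \<forall>B\<in>{C \<in> M. C \<subseteq> S}. \<not> crossE p A B" using nc by blast
  then show ?thesis unfolding ncmK_def using pm by blast
qed

definition hh :: "nat \<Rightarrow> nat \<Rightarrow> nat set set \<times> nat set set \<Rightarrow> nat set set" where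
  "hh a y p = insert {a, y} (fst p \<union> snd p)"

lemma split_fwd:
  assumes M: "M \<in> ncm {a..<e}" and ae: "a < e"
  shows "\<exists>y\<in>{Suc a..<e}. M \<in> hh a y ` (ncm {Suc a..<y} \<times> ncm {Suc y..<e})"
proof -
  obtain A where A: "A \<in> M" "a \<in> A" using ncm_ex[OF M] ae by auto
  obtain p q where pq: "A = {p, q}" "p \<noteq> q" using arc2 ncm_arc[OF M A(1)] by blast
  obtain y where Ay: "A = {a, y}" "y \<noteq> a" using pq A(2) by (metis insert_commute insertE singletonD)
  have ye: "y \<in> {a..<e}" using ncm_arc[OF M A(1)] Ay by auto
  then have ay: "a < y" using Ay by auto
  have ay1: "{a, y} \<in> M" using A Ay by simp
  define M1 where "M1 = {C \<in> M. C \<subseteq> {Suc a..<y}}"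
  define M2 where "M2 = {C \<in> M. C \<subseteq> {Suc y..<e}}"
  have M1: "M1 \<in> ncm {Suc a..<y}" unfolding M1_def
  proof (rule sub_ncm[OF M])
    show "{Suc a..<y} \<subseteq> {a..<e}" using ye by auto
    fix x C assume x: "x \<in> {Suc a..<y}" and C: "C \<in> M" "x \<in> C"
    show "C \<subseteq> {Suc a..<y}" using arc_split[OF M ay1 ay C(1)] x C(2) by auto
  qed
  have M2: "M2 \<in> ncm {Suc y..<e}" unfolding M2_def
  proof (rule sub_ncm[OF M])
    show "{Suc y..<e} \<subseteq> {a..<e}" using ye by auto
    fix x C assume x: "x \<in> {Suc y..<e}" and C: "C \<in> M" "x \<in> C"
    show "C \<subseteq> {Suc y..<e}" using arc_split[OF M ay1 ay C(1)] x C(2) ay by auto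
  qed
  have "C \<in> insert {a,y} (M1 \<union> M2)" if "C \<in> M" for C
    using arc_split[OF M ay1 ay that] that unfolding M1_def M2_def by blast
  moreover have "insert {a,y} (M1 \<union> M2) \<subseteq> M" using ay1 unfolding M1_def M2_def by blast
  ultimately have "M = hh a y (M1, M2)" unfolding hh_def by auto
  then have "M \<in> hh a y ` (ncm {Suc a..<y} \<times> ncm {Suc y..<e})" using M1 M2 by blast
  moreover have "y \<in> {Suc a..<e}" using ye ay by simp
  ultimately show ?thesis by blast
qed

lemma decomp:
  assumes "a < e"
  shows "ncm {a..<e} = (\<Union>y\<in>{Suc a..<e}. hh a y ` (ncm {Suc a..<y} \<times> ncm {Suc y..<e}))"
proof
  show "ncm {a..<e} \<subseteq> (\<Union>y\<in>{Suc a..<e}. hh a y ` (ncm {Suc a..<y} \<times> ncm {Suc y..<e}))"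
  proof
    fix M assume "M \<in> ncm {a..<e}"
    from split_fwd[OF this assms] show "M \<in> (\<Union>y\<in>{Suc a..<e}. hh a y ` (ncm {Suc a..<y} \<times> ncm {Suc y..<e}))"
      by (simp only: UN_iff)
  qed
  show "(\<Union>y\<in>{Suc a..<e}. hh a y ` (ncm {Suc a..<y} \<times> ncm {Suc y..<e})) \<subseteq> ncm {a..<e}"
  proof (intro subsetI, elim UN_E imageE SigmaE)
    fix M y q M1 M2 assume "y \<in> {Suc a..<e}" "M = hh a y q" "q = (M1, M2)" "M1 \<in> ncm {Suc a..<y}" "M2 \<in> ncm {Suc y..<e}"
    then show "M \<in> ncm {a..<e}" unfolding hh_def using comb[of a y e M1 M2] by simp
  qed
qed

lemma recover1:
  assumes "a < y" "M1 \<in> ncm {Suc a..<y}" "M2 \<in> ncm {Suc y..<e}"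
  shows "{C \<in> hh a y (M1, M2). C \<subseteq> {Suc a..<y}} = M1"
proof -
  have "\<not> C \<subseteq> {Suc a..<y}" if "C \<in> M2" for C
  proof
    assume "C \<subseteq> {Suc a..<y}"
    moreover have "C \<subseteq> {Suc y..<e}" "card C = 2" using ncm_arc[OF assms(3) that] by auto
    moreover obtain x where "x \<in> C" using \<open>card C = 2\<close> by fastforce
    ultimately show False by (meson atLeastLessThan_iff not_less_eq_eq order_less_imp_le subsetD)
  qed
  have "\<not> {a, y} \<subseteq> {Suc a..<y}" by auto
  then show ?thesis using ncm_arc[OF assms(2)] \<open>\<And>C. C \<in> M2 \<Longrightarrow> \<not> C \<subseteq> {Suc a..<y}\<close> unfolding hh_def by auto
qed

lemma recover2:
  assumes "a < y" "M1 \<in> ncm {Suc a..<y}" "M2 \<in> ncm {Suc y..<e}"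
  shows "{C \<in> hh a y (M1, M2). C \<subseteq> {Suc y..<e}} = M2"
proof -
  have "\<not> C \<subseteq> {Suc y..<e}" if "C \<in> M1" for C
  proof
    assume "C \<subseteq> {Suc y..<e}"
    moreover have "C \<subseteq> {Suc a..<y}" "card C = 2" using ncm_arc[OF assms(2) that] by auto
    moreover obtain x where "x \<in> C" using \<open>card C = 2\<close> by fastforce
    ultimately show False by (meson atLeastLessThan_iff not_less_eq_eq order_less_imp_le subsetD)
  qed
  have "\<not> {a, y} \<subseteq> {Suc y..<e}" using assms(1) by auto
  then show ?thesis using ncm_arc[OF assms(3)] \<open>\<And>C. C \<in> M1 \<Longrightarrow> \<not> C \<subseteq> {Suc y..<e}\<close> unfolding hh_def by auto
qed

lemma inj_hh:
  assumes "a < y"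
  shows "inj_on (hh a y) (ncm {Suc a..<y} \<times> ncm {Suc y..<e})"
proof (rule inj_onI)
  fix p q assume p: "p \<in> ncm {Suc a..<y} \<times> ncm {Suc y..<e}" and q: "q \<in> ncm {Suc a..<y} \<times> ncm {Suc y..<e}"
    and eq: "hh a y p = hh a y q"
  obtain p1 p2 q1 q2 where pp: "p = (p1, p2)" and qq: "q = (q1, q2)" by (cases p, cases q)
  have m: "p1 \<in> ncm {Suc a..<y}" "p2 \<in> ncm {Suc y..<e}" "q1 \<in> ncm {Suc a..<y}" "q2 \<in> ncm {Suc y..<e}"
    using p q pp qq by auto
  have eq': "hh a y (p1, p2) = hh a y (q1, q2)" using eq pp qq by simp
  have "p1 = q1" using recover1[OF assms m(1,2)] recover1[OF assms m(3,4)] eq' by simp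
  moreover have "p2 = q2" using recover2[OF assms m(1,2)] recover2[OF assms m(3,4)] eq' by simp
  ultimately show "p = q" using pp qq by simp
qed

lemma disj_hh:
  assumes "y \<noteq> y'" "a < y'"
  shows "hh a y ` (ncm {Suc a..<y} \<times> ncm {Suc y..<e}) \<inter> hh a y' ` (ncm {Suc a..<y'} \<times> ncm {Suc y'..<e}) = {}"
proof (rule ccontr)
  assume "\<not> ?thesis"
  then obtain M1 M2 M1' M2' where m: "M1 \<in> ncm {Suc a..<y}" "M2 \<in> ncm {Suc y..<e}" "M1' \<in> ncm {Suc a..<y'}" "M2' \<in> ncm {Suc y'..<e}"
    and eq: "hh a y (M1, M2) = hh a y' (M1', M2')" by blast
  have "{a, y} \<in> hh a y' (M1', M2')" using eq unfolding hh_def by auto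
  then consider "{a, y} = {a, y'}" | "{a, y} \<in> M1'" | "{a, y} \<in> M2'" unfolding hh_def by auto
  then show False
  proof cases
    case 1 then show False using assms by (auto simp: doubleton_eq_iff)
  next
    case 2 then show False using ncm_arc[OF m(3) 2] by auto
  next
    case 3 then show False using ncm_arc[OF m(4) 3] assms(2) by auto
  qed
qed


lemma outer_hh:
  assumes ay: "a < y" "y < e" and M1: "M1 \<in> ncm {Suc a..<y}" and M2: "M2 \<in> ncm {Suc y..<e}"
  shows "outer (hh a y (M1, M2)) = insert {a, y} (outer M2)" "{a, y} \<notin> outer M2"
proof -
  let ?M = "hh a y (M1, M2)"
  have Mn: "?M \<in> ncm {a..<e}" unfolding hh_def using comb[OF ay M1 M2] by simp
  have e1: "Suc a \<le> x \<and> x < y" if "A \<in> M1" "x \<in> A" for A x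
    using ncm_arc[OF M1 that(1)] that(2) by (meson atLeastLessThan_iff subsetD)
  have e2: "Suc y \<le> x \<and> x < e" if "A \<in> M2" "x \<in> A" for A x
    using ncm_arc[OF M2 that(1)] that(2) by (meson atLeastLessThan_iff subsetD)
  have e0: "a \<le> x" if "A \<in> ?M" "x \<in> A" for A x
    using ncm_arc[OF Mn that(1)] that(2) by (meson atLeastLessThan_iff subsetD)
  have ne: "\<exists>x. x \<in> A" if "A \<in> M2" for A
    using ncm_arc[OF M2 that] by (metis card.empty ex_in_conv zero_neq_numeral)
  have memM: "A \<in> ?M \<longleftrightarrow> A = {a, y} \<or> A \<in> M1 \<or> A \<in> M2" for A unfolding hh_def by auto
  show "{a, y} \<notin> outer M2"
  proof
    assume "{a, y} \<in> outer M2"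
    then have "{a, y} \<in> M2" unfolding outerK_def by simp
    from e2[OF this, of a] ay show False by simp
  qed
  show "outer ?M = insert {a, y} (outer M2)"
  proof (intro equalityI subsetI)
    fix C assume C: "C \<in> outer ?M"
    then have CM: "C \<in> ?M" and nn: "\<And>B. B \<in> ?M \<Longrightarrow> \<not> nestE id C B" unfolding outerK_def by auto
    from CM consider "C = {a, y}" | "C \<in> M1" | "C \<in> M2" using memM by blast
    then show "C \<in> insert {a, y} (outer M2)"
    proof cases
      case 1 then show ?thesis by simp
    next
      case 2
      have "nestE id C {a, y}" unfolding nestE_def using e1[OF 2] by force
      moreover have "{a, y} \<in> ?M" using memM by simp
      ultimately show ?thesis using nn by blast
    next
      case 3
      have "\<And>B. B \<in> M2 \<Longrightarrow> \<not> nestE id C B" using nn memM by blast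
      then show ?thesis using 3 unfolding outerK_def by blast
    qed
  next
    fix C assume C: "C \<in> insert {a, y} (outer M2)"
    then consider "C = {a, y}" | "C \<in> outer M2" by blast
    then show "C \<in> outer ?M"
    proof cases
      case 1
      have "\<not> nestE id C B" if B: "B \<in> ?M" for B
      proof
        assume "nestE id C B"
        then obtain c where c: "c \<in> B" "c < a" unfolding nestE_def 1 by auto
        from e0[OF B c(1)] c(2) show False by simp
      qed
      then show ?thesis using 1 memM unfolding outerK_def by blast
    next
      case 2
      then have C2: "C \<in> M2" and nn: "\<And>B. B \<in> M2 \<Longrightarrow> \<not> nestE id C B" unfolding outerK_def by auto
      obtain x where x: "x \<in> C" using ne[OF C2] by blast
      have xy: "y < x" using e2[OF C2 x] by simp
      have "\<not> nestE id C B" if B: "B \<in> ?M" for B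
      proof
        assume "nestE id C B"
        then obtain d where d: "d \<in> B" "x < d" unfolding nestE_def using x by force
        from B consider "B = {a, y}" | "B \<in> M1" | "B \<in> M2" using memM by blast
        then show False
        proof cases
          case 1 then show False using d xy ay by auto
        next
          case 2 then show False using e1[OF 2 d(1)] d xy by simp
        next
          case 3 then show False using nn \<open>nestE id C B\<close> by blast
        qed
      qed
      then show ?thesis using C2 memM unfolding outerK_def by blast
    qed
  qed
qed



lemma finite_ncm: "finite P \<Longrightarrow> finite (ncmK p P)"
  by (rule finite_subset[of _ "Pow (Pow P)"]) (auto simp: ncmK_def pmE_def)

definition Fs :: "nat set \<Rightarrow> nat" where
  "Fs P = (\<Sum>M\<in>ncm P. 2 ^ card (outer M))"

lemma count_G:
  assumes ae: "a < e"
  shows "card (ncm {a..<e}) = (\<Sum>y\<in>{Suc a..<e}. card (ncm {Suc a..<y}) * card (ncm {Suc y..<e}))"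
proof -
  have "card (ncm {a..<e}) = (\<Sum>y\<in>{Suc a..<e}. card (hh a y ` (ncm {Suc a..<y} \<times> ncm {Suc y..<e})))"
    unfolding decomp[OF ae]
  proof (rule card_UN_disjoint)
    show "\<forall>i\<in>{Suc a..<e}. finite (hh a i ` (ncm {Suc a..<i} \<times> ncm {Suc i..<e}))"
      by (auto intro: finite_ncm)
    show "\<forall>i\<in>{Suc a..<e}. \<forall>j\<in>{Suc a..<e}. i \<noteq> j \<longrightarrow>
      hh a i ` (ncm {Suc a..<i} \<times> ncm {Suc i..<e}) \<inter> hh a j ` (ncm {Suc a..<j} \<times> ncm {Suc j..<e}) = {}"
      using disj_hh by auto
  qed simp
  also have "\<dots> = (\<Sum>y\<in>{Suc a..<e}. card (ncm {Suc a..<y}) * card (ncm {Suc y..<e}))"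
  proof (rule sum.cong)
    fix y assume "y \<in> {Suc a..<e}"
    then have "a < y" by simp
    then show "card (hh a y ` (ncm {Suc a..<y} \<times> ncm {Suc y..<e})) = card (ncm {Suc a..<y}) * card (ncm {Suc y..<e})"
      using card_image[OF inj_hh] by (simp add: card_cartesian_product)
  qed simp
  finally show ?thesis .
qed

lemma sum_snd: "finite X \<Longrightarrow> finite Y \<Longrightarrow> (\<Sum>p\<in>X \<times> Y. g (snd p)) = card X * sum g Y"
proof -
  assume f: "finite X" "finite Y"
  have "(\<Sum>x\<in>X. \<Sum>y\<in>Y. g y) = (\<Sum>(x,y)\<in>X \<times> Y. g y)" by (rule sum.cartesian_product)
  moreover have "(\<Sum>(x,y)\<in>X \<times> Y. g y) = (\<Sum>p\<in>X \<times> Y. g (snd p))" by (rule sum.cong) auto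
  ultimately show ?thesis by simp
qed

lemma count_F:
  assumes ae: "a < e"
  shows "Fs {a..<e} = (\<Sum>y\<in>{Suc a..<e}. 2 * card (ncm {Suc a..<y}) * Fs {Suc y..<e})"
proof -
  let ?w = "\<lambda>M. (2::nat) ^ card (outer M)"
  have "Fs {a..<e} = (\<Sum>y\<in>{Suc a..<e}. sum ?w (hh a y ` (ncm {Suc a..<y} \<times> ncm {Suc y..<e})))"
    unfolding Fs_def decomp[OF ae]
  proof (rule sum.UNION_disjoint)
    show "\<forall>i\<in>{Suc a..<e}. finite (hh a i ` (ncm {Suc a..<i} \<times> ncm {Suc i..<e}))"
      by (auto intro: finite_ncm)
    show "\<forall>i\<in>{Suc a..<e}. \<forall>j\<in>{Suc a..<e}. i \<noteq> j \<longrightarrow>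
      hh a i ` (ncm {Suc a..<i} \<times> ncm {Suc i..<e}) \<inter> hh a j ` (ncm {Suc a..<j} \<times> ncm {Suc j..<e}) = {}"
      using disj_hh by auto
  qed simp
  also have "\<dots> = (\<Sum>y\<in>{Suc a..<e}. 2 * card (ncm {Suc a..<y}) * Fs {Suc y..<e})"
  proof (rule sum.cong)
    fix y assume "y \<in> {Suc a..<e}"
    then have ay: "a < y" "y < e" by auto
    have "sum ?w (hh a y ` (ncm {Suc a..<y} \<times> ncm {Suc y..<e})) = (\<Sum>p\<in>ncm {Suc a..<y} \<times> ncm {Suc y..<e}. ?w (hh a y p))"
      by (rule sum.reindex[OF inj_hh[OF ay(1)], unfolded comp_def])
    also have "\<dots> = (\<Sum>p\<in>ncm {Suc a..<y} \<times> ncm {Suc y..<e}. 2 * ?w (snd p))"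
    proof (rule sum.cong)
      fix p assume p: "p \<in> ncm {Suc a..<y} \<times> ncm {Suc y..<e}"
      obtain M1 M2 where pp: "p = (M1, M2)" by (cases p)
      have m: "M1 \<in> ncm {Suc a..<y}" "M2 \<in> ncm {Suc y..<e}" using p pp by auto
      have fin: "finite (outer M2)"
        by (rule finite_subset[of _ M2]) (auto simp: outerK_def intro: finite_subset[OF _ finite_ncm[of "{Suc y..<e}" id]] m(2) rev_finite_subset[of "Pow {Suc y..<e}"] dest: ncm_arc[OF m(2)])
      have "card (outer (hh a y p)) = Suc (card (outer M2))"
        using outer_hh[OF ay m] fin pp by simp
      then show "?w (hh a y p) = 2 * ?w (snd p)" using pp by simp
    qed simp
    also have "\<dots> = 2 * card (ncm {Suc a..<y}) * Fs {Suc y..<e}"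
      unfolding Fs_def using sum_snd[of "ncm {Suc a..<y}" "ncm {Suc y..<e}" "\<lambda>M. 2 * ?w M"]
      by (simp add: finite_ncm sum_distrib_left mult_ac)
    finally show "sum ?w (hh a y ` (ncm {Suc a..<y} \<times> ncm {Suc y..<e})) = 2 * card (ncm {Suc a..<y}) * Fs {Suc y..<e}" .
  qed simp
  finally show ?thesis .
qed


lemma ncm_empty: "ncmK p {} = {{}}"
proof -
  have "M = {}" if "M \<in> ncmK p {}" for M
  proof (rule ccontr)
    assume "M \<noteq> {}"
    then obtain A where "A \<in> M" by blast
    from ncm_arc[OF that this] show False by auto
  qed
  moreover have "{} \<in> ncmK p {}" unfolding ncmK_def pmE_def by simp
  ultimately show ?thesis by blast
qed

lemma ncm_single: "ncmK p {a} = {}"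
proof -
  have False if M: "M \<in> ncmK p {a}" for M
  proof -
    obtain A where A: "A \<in> M" "a \<in> A" using ncm_ex[OF M] by blast
    have "A \<subseteq> {a}" "card A = 2" using ncm_arc[OF M A(1)] by auto
    moreover have "card A \<le> card {a}" using card_mono[OF _ \<open>A \<subseteq> {a}\<close>] by simp
    ultimately show False by simp
  qed
  then show ?thesis by blast
qed

lemma reidx: "(\<Sum>y\<in>{Suc a..<a + Suc (Suc n)}. g y) = (\<Sum>i\<le>n. g (Suc a + i))"
  by (rule sum.reindex_bij_witness[of _ "\<lambda>i. Suc a + i" "\<lambda>y. y - Suc a"]) auto

lemma main_count: "card (ncm {a..<a + n}) = card (Dyck n) \<and> Fs {a..<a + n} = card (Bal n)"
proof (induction n arbitrary: a rule: less_induct)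
  case (less n)
  consider "n = 0" | "n = 1" | n' where "n = Suc (Suc n')"
    by (metis One_nat_def not0_implies_Suc)
  then show ?case
  proof cases
    case 1
    then show ?thesis using Dyck_0 Bal_0 by (simp add: ncm_empty Fs_def outerK_def)
  next
    case 2
    then show ?thesis using Dyck_1 Bal_1 by (simp add: ncm_single Fs_def)
  next
    case 3
    have ae: "a < a + Suc (Suc n')" by simp
    have iv: "{Suc (Suc a + i)..<a + Suc (Suc n')} = {Suc (Suc a + i)..<Suc (Suc a + i) + (n' - i)}"
      if "i \<le> n'" for i using that by auto
    have IH1: "card (ncm {Suc a..<Suc a + i}) = card (Dyck i)" "Fs {Suc a..<Suc a + i} = card (Bal i)"
      if "i \<le> n'" for i
    proof -
      have "i < n" using that 3 by simp
      from less.IH[OF this, of "Suc a"] show "card (ncm {Suc a..<Suc a + i}) = card (Dyck i)" "Fs {Suc a..<Suc a + i} = card (Bal i)"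
        by blast+
    qed
    have IH2: "card (ncm {Suc (Suc a + i)..<a + Suc (Suc n')}) = card (Dyck (n' - i))"
       "Fs {Suc (Suc a + i)..<a + Suc (Suc n')} = card (Bal (n' - i))"
      if "i \<le> n'" for i
    proof -
      have "n' - i < n" using that 3 by simp
      from less.IH[OF this, of "Suc (Suc a + i)"] show "card (ncm {Suc (Suc a + i)..<a + Suc (Suc n')}) = card (Dyck (n' - i))"
       "Fs {Suc (Suc a + i)..<a + Suc (Suc n')} = card (Bal (n' - i))"
        unfolding iv[OF that] by blast+
    qed
    have "card (ncm {a..<a + n}) = (\<Sum>y\<in>{Suc a..<a + Suc (Suc n')}. card (ncm {Suc a..<y}) * card (ncm {Suc y..<a + Suc (Suc n')}))"
      using count_G[OF ae] 3 by simp
    also have "\<dots> = (\<Sum>i\<le>n'. card (ncm {Suc a..<Suc a + i}) * card (ncm {Suc (Suc a + i)..<a + Suc (Suc n')}))"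
      by (rule reidx)
    also have "\<dots> = (\<Sum>i\<le>n'. card (Dyck i) * card (Dyck (n' - i)))"
      apply (rule sum.cong[OF refl])
      subgoal for i using IH1[of i] IH2[of i] by (simp only: atMost_iff)
      done
    also have "\<dots> = card (Dyck n)" using card_Dyck_rec 3 by simp
    finally have G: "card (ncm {a..<a + n}) = card (Dyck n)" .
    note G
    have "Fs {a..<a + n} = (\<Sum>y\<in>{Suc a..<a + Suc (Suc n')}. 2 * card (ncm {Suc a..<y}) * Fs {Suc y..<a + Suc (Suc n')})"
      using count_F[OF ae] 3 by simp
    also have "\<dots> = (\<Sum>i\<le>n'. 2 * card (ncm {Suc a..<Suc a + i}) * Fs {Suc (Suc a + i)..<a + Suc (Suc n')})"
      by (rule reidx)
    also have "\<dots> = (\<Sum>i\<le>n'. 2 * card (Dyck i) * card (Bal (n' - i)))"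
      apply (rule sum.cong[OF refl])
      subgoal for i using IH1[of i] IH2[of i] by (simp only: atMost_iff)
      done
    also have "\<dots> = card (Bal n)" using card_Bal_rec 3 by simp
    finally show ?thesis using G by (simp add: id_def)
  qed
qed



lemma two_el:
  assumes "card A = 2" "a \<in> A" "a2 \<in> A" "a \<noteq> a2"
  shows "A = {a, a2}"
proof -
  have f: "finite A" using assms(1) by (metis card.infinite zero_neq_numeral)
  have "{a, a2} \<subseteq> A" using assms by auto
  moreover have "card {a, a2} = card A" using assms by simp
  ultimately show ?thesis using card_subset_eq[OF f] by blast
qed

lemma crossing_iff:
  assumes "card A = 2" "card B = 2"
  shows "crossing t s A B = crossE (pos t s) A B"
proof
  assume "crossing t s A B"
  then show "crossE (pos t s) A B" unfolding crossing_def crossE_def by blast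
next
  assume "crossE (pos t s) A B"
  then obtain a b c d where abcd: "a \<in> A" "b \<in> A" "c \<in> B" "d \<in> B"
    "pos t s a < pos t s c" "pos t s c < pos t s b" "pos t s b < pos t s d"
    unfolding crossE_def by blast
  have "a \<noteq> b" "c \<noteq> d" using abcd by auto
  then have "A = {a, b}" "B = {c, d}" using two_el[OF assms(1) abcd(1,2)] two_el[OF assms(2) abcd(3,4)] by auto
  then show "crossing t s A B" unfolding crossing_def using abcd by blast
qed

lemma nested_iff:
  assumes "card B = 2" "A \<noteq> {}"
  shows "nested_in t s A B = nestE (pos t s) A B"
proof
  assume "nested_in t s A B"
  then show "nestE (pos t s) A B" unfolding nested_in_def nestE_def by blast
next
  assume "nestE (pos t s) A B"
  then obtain c d where cd: "c \<in> B" "d \<in> B" "\<forall>x\<in>A. pos t s c < pos t s x \<and> pos t s x < pos t s d"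
    unfolding nestE_def by blast
  obtain x where "x \<in> A" using assms(2) by blast
  then have "c \<noteq> d" using cd(3) by force
  then have "B = {c, d}" using two_el[OF assms(1) cd(1,2)] by auto
  then show "nested_in t s A B" unfolding nested_in_def using cd by blast
qed

lemma marked_eq: "marked_diagrams t s = mkK (pos t s) (pts t s)"
proof -
  have TL: "TL_diagrams t s = ncmK (pos t s) (pts t s)"
  proof (intro equalityI subsetI)
    fix M assume M: "M \<in> TL_diagrams t s"
    then have pm: "pmE (pts t s) M" and c2: "\<And>A. A \<in> M \<Longrightarrow> card A = 2"
      unfolding TL_diagrams_def pm_pmE pmE_def by auto
    have "\<not> crossE (pos t s) A B" if "A \<in> M" "B \<in> M" for A B
      using M that crossing_iff[OF c2 c2, of A B t s] unfolding TL_diagrams_def by auto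
    then show "M \<in> ncmK (pos t s) (pts t s)" unfolding ncmK_def using pm by blast
  next
    fix M assume M: "M \<in> ncmK (pos t s) (pts t s)"
    then have pm: "pmE (pts t s) M" and c2: "\<And>A. A \<in> M \<Longrightarrow> card A = 2"
      unfolding ncmK_def pmE_def by auto
    have "\<not> crossing t s A B" if "A \<in> M" "B \<in> M" for A B
      using M that crossing_iff[OF c2 c2, of A B t s] unfolding ncmK_def by auto
    then show "M \<in> TL_diagrams t s" unfolding TL_diagrams_def pm_pmE using pm by blast
  qed
  have LA: "leftmost_arcs t s M = outerK (pos t s) M" if c2: "\<And>A. A \<in> M \<Longrightarrow> card A = 2" for M
  proof -
    have ne: "A \<noteq> {}" if "A \<in> M" for A using c2[OF that] by auto
    show ?thesis unfolding leftmost_arcs_def outerK_def using nested_iff[OF c2 ne] by blast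
  qed
  show ?thesis
  proof (intro equalityI subsetI)
    fix x assume "x \<in> marked_diagrams t s"
    then obtain M D where x: "x = (M, D)" "M \<in> TL_diagrams t s" "D \<subseteq> leftmost_arcs t s M"
      unfolding marked_diagrams_def by blast
    have c2: "\<And>A. A \<in> M \<Longrightarrow> card A = 2" using x(2) unfolding TL ncmK_def pmE_def by auto
    show "x \<in> mkK (pos t s) (pts t s)" using x TL LA[OF c2] unfolding mkK_def by auto
  next
    fix x assume "x \<in> mkK (pos t s) (pts t s)"
    then obtain M D where x: "x = (M, D)" "M \<in> ncmK (pos t s) (pts t s)" "D \<subseteq> outerK (pos t s) M"
      unfolding mkK_def by blast
    have c2: "\<And>A. A \<in> M \<Longrightarrow> card A = 2" using x(2) unfolding ncmK_def pmE_def by auto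
    show "x \<in> marked_diagrams t s" using x TL LA[OF c2] unfolding marked_diagrams_def by auto
  qed
qed

lemma transfer:
  assumes inj: "inj_on f P" and img: "f ` P = Q" and key: "\<And>x. x \<in> P \<Longrightarrow> q (f x) = p x"
    and MD: "(M, D) \<in> mkK p P"
  shows "((`) f ` M, (`) f ` D) \<in> mkK q Q"
proof -
  have M: "M \<in> ncmK p P" and D: "D \<subseteq> outerK p M" using MD unfolding mkK_def by auto
  have sub: "A \<subseteq> P" "card A = 2" if "A \<in> M" for A using ncm_arc[OF M that] by auto
  have cr: "crossE q (f ` A) (f ` B) = crossE p A B" if "A \<subseteq> P" "B \<subseteq> P" for A B
    unfolding crossE_def using that key by (auto 0 3 simp: subset_iff) 
  have ns: "nestE q (f ` A) (f ` B) = nestE p A B" if "A \<subseteq> P" "B \<subseteq> P" for A B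
    unfolding nestE_def using that key by (auto 0 3 simp: subset_iff)
  let ?M = "(`) f ` M"
  have arcs: "\<forall>A'\<in>?M. A' \<subseteq> Q \<and> card A' = 2"
  proof
    fix A' assume "A' \<in> ?M"
    then obtain A where A: "A \<in> M" "A' = f ` A" by blast
    have "card (f ` A) = card A" using inj_on_subset[OF inj sub(1)[OF A(1)]] by (rule card_image)
    then show "A' \<subseteq> Q \<and> card A' = 2" using A sub[OF A(1)] img by auto
  qed
  have uniq: "\<exists>!A'. A' \<in> ?M \<and> y \<in> A'" if y: "y \<in> Q" for y
  proof -
    obtain x where x: "x \<in> P" "y = f x" using y img by blast
    obtain A where A: "A \<in> M" "x \<in> A" using ncm_ex[OF M x(1)] by blast
    show ?thesis
    proof (rule ex1I[of _ "f ` A"])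
      show "f ` A \<in> ?M \<and> y \<in> f ` A" using A x by blast
      fix A' assume A': "A' \<in> ?M \<and> y \<in> A'"
      then obtain B where B: "B \<in> M" "A' = f ` B" by blast
      then obtain x' where x': "x' \<in> B" "f x' = y" using A' by blast
      have "x' = x" using inj x x' sub(1)[OF B(1)] unfolding inj_on_def by blast
      then have "B = A" using ncm_unique[OF M x(1) B(1) _ A] x' by blast
      then show "A' = f ` A" using B by simp
    qed
  qed
  have pm: "pmE Q ?M" unfolding pmE_def
  proof (intro conjI)
    show "\<forall>A\<in>?M. A \<subseteq> Q \<and> card A = 2" by (rule arcs)
    show "\<forall>x\<in>Q. \<exists>!A. A \<in> ?M \<and> x \<in> A" by (intro ballI) (rule uniq)
  qed
  have nc: "\<forall>A\<in>?M. \<forall>B\<in>?M. \<not> crossE q A B"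
    using cr sub ncm_nc[OF M] by auto
  have Mn: "?M \<in> ncmK q Q" unfolding ncmK_def using pm nc by blast
  have Dn: "(`) f ` D \<subseteq> outerK q ?M"
  proof
    fix A' assume "A' \<in> (`) f ` D"
    then obtain A where A: "A \<in> D" "A' = f ` A" by blast
    have AM: "A \<in> M" and nn: "\<And>B. B \<in> M \<Longrightarrow> \<not> nestE p A B" using A D unfolding outerK_def by auto
    have "\<not> nestE q (f ` A) (f ` B)" if "B \<in> M" for B using ns[OF sub(1)[OF AM] sub(1)[OF that]] nn[OF that] by simp
    then show "A' \<in> outerK q ?M" using A AM unfolding outerK_def by blast
  qed
  show ?thesis unfolding mkK_def using Mn Dn by blast
qed



lemma card_mk: "finite P \<Longrightarrow> card (mkK p P) = (\<Sum>M\<in>ncmK p P. 2 ^ card (outerK p M))"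
proof -
  assume f: "finite P"
  have "mkK p P = Sigma (ncmK p P) (\<lambda>M. Pow (outerK p M))" unfolding mkK_def by auto
  moreover have "finite (outerK p M)" if "M \<in> ncmK p P" for M
  proof (rule finite_subset)
    show "outerK p M \<subseteq> Pow P" using ncm_arc[OF that] unfolding outerK_def by auto
  qed (simp add: f)
  ultimately show ?thesis using finite_ncm[OF f] by (simp add: card_Pow)
qed

lemma img_inv: "(\<And>x. x \<in> P \<Longrightarrow> g (f x) = x) \<Longrightarrow> A \<subseteq> P \<Longrightarrow> g ` f ` A = A"
proof -
  assume h: "\<And>x. x \<in> P \<Longrightarrow> g (f x) = x" and A: "A \<subseteq> P"
  have "g ` f ` A = (\<lambda>x. g (f x)) ` A" by (simp add: image_image)
  also have "\<dots> = (\<lambda>x. x) ` A" using h A by (intro image_cong) auto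
  finally show ?thesis by simp
qed

lemma img_inv2:
  assumes h: "\<And>x. x \<in> P \<Longrightarrow> g (f x) = x" and M: "\<And>A. A \<in> M \<Longrightarrow> A \<subseteq> P"
  shows "(`) g ` (`) f ` M = M"
proof -
  have eq: "g ` f ` A = A" if "A \<in> M" for A by (rule img_inv[of P]) (use h M that in auto)
  have "(`) g ` (`) f ` M = (\<lambda>A. g ` f ` A) ` M" by (simp add: image_image)
  also have "\<dots> = (\<lambda>A. A) ` M" using eq by (intro image_cong) auto
  finally show ?thesis by simp
qed

lemma mk_sub: "(M, D) \<in> mkK p P \<Longrightarrow> A \<in> M \<or> A \<in> D \<Longrightarrow> A \<subseteq> P"
  unfolding mkK_def outerK_def using ncm_arc by blast

lemma bij_mk:
  assumes inj: "inj_on f P" and img: "f ` P = Q" and key: "\<And>x. x \<in> P \<Longrightarrow> q (f x) = p x"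
    and inj': "inj_on g Q" and img': "g ` Q = P" and key': "\<And>x. x \<in> Q \<Longrightarrow> p (g x) = q x"
    and gf: "\<And>x. x \<in> P \<Longrightarrow> g (f x) = x" and fg: "\<And>x. x \<in> Q \<Longrightarrow> f (g x) = x"
  shows "card (mkK p P) = card (mkK q Q)"
proof -
  let ?F = "\<lambda>(M, D). ((`) f ` M, (`) f ` D)"
  let ?G = "\<lambda>(M, D). ((`) g ` M, (`) g ` D)"
  have "bij_betw ?F (mkK p P) (mkK q Q)"
  proof (rule bij_betw_byWitness[where f' = ?G])
    show "\<forall>x\<in>mkK p P. ?G (?F x) = x"
    proof
      fix x assume x: "x \<in> mkK p P"
      obtain M D where MD: "x = (M, D)" by (cases x)
      have "(`) g ` (`) f ` M = M" by (rule img_inv2[of P g f]) (use gf in auto, use mk_sub x MD in blast)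
      moreover have "(`) g ` (`) f ` D = D" by (rule img_inv2[of P g f]) (use gf in auto, use mk_sub x MD in blast)
      ultimately show "?G (?F x) = x" using MD by simp
    qed
    show "\<forall>y\<in>mkK q Q. ?F (?G y) = y"
    proof
      fix x assume x: "x \<in> mkK q Q"
      obtain M D where MD: "x = (M, D)" by (cases x)
      have "(`) f ` (`) g ` M = M" by (rule img_inv2[of Q f g]) (use fg in auto, use mk_sub x MD in blast)
      moreover have "(`) f ` (`) g ` D = D" by (rule img_inv2[of Q f g]) (use fg in auto, use mk_sub x MD in blast)
      ultimately show "?F (?G x) = x" using MD by simp
    qed
    show "?F ` mkK p P \<subseteq> mkK q Q"
    proof
      fix y assume "y \<in> ?F ` mkK p P"
      then obtain M D where "(M, D) \<in> mkK p P" "y = ?F (M, D)" by auto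
      then show "y \<in> mkK q Q" using transfer[where f=f and P=P and Q=Q and q=q and p=p, OF inj img key] by simp
    qed
    show "?G ` mkK q Q \<subseteq> mkK p P"
    proof
      fix y assume "y \<in> ?G ` mkK q Q"
      then obtain M D where "(M, D) \<in> mkK q Q" "y = ?G (M, D)" by auto
      then show "y \<in> mkK p P" using transfer[where f=g and P=Q and Q=P and q=p and p=q, OF inj' img' key'] by simp
    qed
  qed
  then show ?thesis by (rule bij_betw_same_card)
qed

lemma b_eq: "b t s = card (Bal (t + s))"
proof -
  define g where "g x = (if x < t then Bot x else Top (t + s - 1 - x))" for x
  have gf: "g (pos t s x) = x" if "x \<in> pts t s" for x
    using that unfolding pts_def g_def by auto
  have fg: "pos t s (g x) = x" if "x \<in> {0..<t + s}" for x
    using that unfolding g_def by auto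
  have img: "pos t s ` pts t s = {0..<t + s}"
  proof (intro equalityI subsetI)
    fix y assume "y \<in> pos t s ` pts t s" then show "y \<in> {0..<t + s}" unfolding pts_def by auto
  next
    fix y assume y: "y \<in> {0..<t + s}"
    have "g y \<in> pts t s" using y unfolding g_def pts_def by auto
    then show "y \<in> pos t s ` pts t s" using fg[OF y] by (metis image_eqI)
  qed
  have img': "g ` {0..<t + s} = pts t s"
  proof (intro equalityI subsetI)
    fix y assume "y \<in> g ` {0..<t + s}" then show "y \<in> pts t s" unfolding g_def pts_def by auto
  next
    fix y assume y: "y \<in> pts t s"
    have "pos t s y \<in> {0..<t + s}" using y img by blast
    then show "y \<in> g ` {0..<t + s}" using gf[OF y] by (metis image_eqI)
  qed
  have inj: "inj_on (pos t s) (pts t s)" by (metis gf inj_on_inverseI)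
  have inj': "inj_on g {0..<t + s}" by (metis fg inj_on_inverseI)
  have "b t s = card (mkK (pos t s) (pts t s))" unfolding b_def marked_eq ..
  also have "\<dots> = card (mkK id {0..<t + s})"
    by (rule bij_mk[OF inj img _ inj' img' _ gf fg]) (simp_all add: fg[simplified])
  also have "\<dots> = Fs {0..<t + s}" unfolding Fs_def by (simp add: card_mk)
  also have "\<dots> = card (Bal (t + s))" using main_count[of 0 "t + s"] by simp
  finally show ?thesis .
qed

theorem proposition5p2:
  fixes t k m :: nat
  assumes "t + k = m"
  shows "(\<forall>t' k'. t' + k' = m \<longrightarrow> b t' (t' + 2 * k') = b t (t + 2 * k))
         \<and> b t (t + 2 * k) = (2 * m) choose m"
proof -
  have e: "b t' (t' + 2 * k') = (2 * m) choose m" if h: "t' + k' = m" for t' k'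
  proof -
    have "t' + (t' + 2 * k') = 2 * m" using h by simp
    then show ?thesis using b_eq[of t' "t' + 2 * k'"] card_Bal[of m] by simp
  qed
  show ?thesis using e assms by auto
qed


end
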